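(* Let ${\bf r}=(r_0,r_1,r_2,\dots)$ be a sequence of nonnegative integers with only finitely many nonzero entries, put $n=\sum_{d\ge1}r_d$ and $\ell=-\sum_{d\ge0}(d-1)r_d$, and assume $\ell\ge1$ (so $r_0\ge1$). Then, as polynomials in $x$, $$\mathcal H_{\bf r}(x):=\sum_{F\in\mathscr F({\bf r})}\prod_{v\in I(F)}\frac{((d_v-1)h_v+1)x+1-h_v}{d_vh_v}=\frac{\ell}{r_0}\binom{r_0x}{r_0x-n,\,r_1,\,r_2,\dots},$$ where the right-hand side means the polynomial $\frac{\ell}{r_0}\cdot\frac{(r_0x)(r_0x-1)\cdots(r_0x-n+1)}{r_1!\,r_2!\cdots}$.
   Context: A plane tree is an unlabelled rooted tree in which the children of every vertex are linearly ordered. A plane forest is a finite linearly ordered sequence of plane trees. For vertices $u,v$ in a tree, $v$ is a descendant of $u$ if $u$ lies on the path from the root to $v$ (so $u$ is a descendant of itself). The degree $d_v$ of a vertex $v$ is its number of children; $v$ is internal if $d_v\ge1$, otherwise a leaf. $I(F)$ denotes the set of internal vertices of a forest $F$. The hook length $h_v$ of an internal vertex $v$ is the number of internal vertices among the descendants of $v$ (including $v$ itself). A plane forest is of type ${\bf r}=(r_0,r_1,\dots)$ if it has exactly $r_i$ vertices of degree $i$ for each $i\ge0$; $\mathscr F({\bf r})$ is the set of plane forests of type ${\bf r}$. For such forests $n=\sum_{d\ge1}r_d=|I(F)|$ and $\ell=-\sum_{d\ge0}(d-1)r_d$ is the number of trees. *)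

theory Defs
  imports "HOL-Computational_Algebra.Polynomial"
begin

datatype ptree = Node "ptree list"

fun degs :: "ptree \<Rightarrow> nat list" where
  "degs (Node ts) = length ts # concat (map degs ts)"

definition forest_degs :: "ptree list \<Rightarrow> nat list" where
  "forest_degs F = concat (map degs F)"

definition num_deg :: "ptree list \<Rightarrow> nat \<Rightarrow> nat" where
  "num_deg F i = length (filter (\<lambda>d. d = i) (forest_degs F))"

definition forests_of_type :: "(nat \<Rightarrow> nat) \<Rightarrow> ptree list set" where
  "forests_of_type r = {F. \<forall>i. num_deg F i = r i}"

text \<open>Number of internal vertices of a tree; for the root this is its hook length.\<close>
fun nint :: "ptree \<Rightarrow> nat" where
  "nint (Node ts) = (if ts = [] then 0 else 1 + sum_list (map nint ts))"

text \<open>The factor ((d-1)h+1)x + 1 - h over d h, as a polynomial in x.\<close>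
definition hook_factor :: "nat \<Rightarrow> nat \<Rightarrow> real poly" where
  "hook_factor d h = [: (1 - real h) / (real d * real h),
                        (real ((d - 1) * h + 1)) / (real d * real h) :]"

fun tree_weight :: "ptree \<Rightarrow> real poly" where
  "tree_weight (Node ts) =
     (if ts = [] then 1
      else hook_factor (length ts) (nint (Node ts)) * prod_list (map tree_weight ts))"

definition forest_weight :: "ptree list \<Rightarrow> real poly" where
  "forest_weight F = prod_list (map tree_weight F)"

definition n_of :: "(nat \<Rightarrow> nat) \<Rightarrow> nat" where
  "n_of r = (\<Sum>d\<in>{d. 1 \<le> d \<and> r d \<noteq> 0}. r d)"

definition ell_of :: "(nat \<Rightarrow> nat) \<Rightarrow> int" where
  "ell_of r = - (\<Sum>d\<in>{d. r d \<noteq> 0}. (int d - 1) * int (r d))"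

end

theory Submission
  imports Defs "HOL-Library.Multiset"
begin

definition ff :: "real \<Rightarrow> nat \<Rightarrow> real" where
  "ff z k = (\<Prod>i<k. z - real i)"

lemma ff_0[simp]: "ff z 0 = 1" by (simp add: ff_def)
lemma ff_Suc: "ff z (Suc k) = ff z k * (z - real k)"
  by (simp add: ff_def)
lemma ff_Suc': "ff z (Suc k) = z * ff (z - 1) k"
proof (induction k)
  case 0 then show ?case by (simp add: ff_def)
next
  case (Suc k)
  have "ff z (Suc (Suc k)) = ff z (Suc k) * (z - real (Suc k))" by (rule ff_Suc)
  also have "\<dots> = z * (ff (z - 1) k * (z - 1 - real k))" using Suc by (simp add: algebra_simps)
  also have "\<dots> = z * ff (z - 1) (Suc k)" by (simp add: ff_Suc)
  finally show ?case .
qed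

lemma vandermonde_subsets:
  assumes "finite U"
  shows "(\<Sum>K\<in>Pow U. ff X (card K) * ff Y (card U - card K)) = ff (X + Y) (card U)"
  using assms
proof (induction U rule: finite_induct)
  case empty then show ?case by simp
next
  case (insert x U)
  let ?n = "card U"
  have fin: "finite (Pow U)" using insert by simp
  have disj: "Pow U \<inter> insert x ` Pow U = {}" using insert by auto
  have inj: "inj_on (insert x) (Pow U)" using insert by (auto simp: inj_on_def)
  have cK: "K \<in> Pow U \<Longrightarrow> card K \<le> ?n" for K using insert card_mono by auto
  have cI: "K \<in> Pow U \<Longrightarrow> card (insert x K) = Suc (card K)" for K
    using insert by (auto intro: finite_subset card_insert_disjoint)
  have "(\<Sum>K\<in>Pow (insert x U). ff X (card K) * ff Y (card (insert x U) - card K))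
      = (\<Sum>K\<in>Pow U. ff X (card K) * ff Y (Suc ?n - card K))
        + (\<Sum>K\<in>insert x ` Pow U. ff X (card K) * ff Y (Suc ?n - card K))"
    using insert fin disj by (simp add: Pow_insert sum.union_disjoint)
  also have "(\<Sum>K\<in>insert x ` Pow U. ff X (card K) * ff Y (Suc ?n - card K))
      = (\<Sum>K\<in>Pow U. ff X (Suc (card K)) * ff Y (?n - card K))"
    by (simp add: sum.reindex[OF inj] cI)
  also have "(\<Sum>K\<in>Pow U. ff X (card K) * ff Y (Suc ?n - card K)) + \<dots>
      = (\<Sum>K\<in>Pow U. (ff X (card K) * ff Y (?n - card K)) * (X + Y - real ?n))"
    unfolding sum.distrib[symmetric]
  proof (rule sum.cong[OF refl])
    fix K assume K: "K \<in> Pow U"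
    have e: "Suc ?n - card K = Suc (?n - card K)" using cK[OF K] by simp
    show "ff X (card K) * ff Y (Suc ?n - card K) + ff X (Suc (card K)) * ff Y (?n - card K)
        = ff X (card K) * ff Y (?n - card K) * (X + Y - real ?n)"
      unfolding e ff_Suc using cK[OF K] by (simp add: algebra_simps of_nat_diff)
  qed
  also have "\<dots> = ff (X + Y) ?n * (X + Y - real ?n)"
    using insert by (simp add: sum_distrib_right[symmetric])
  also have "\<dots> = ff (X + Y) (card (insert x U))" using insert by (simp add: ff_Suc)
  finally show ?case .
qed

definition Asub :: "real \<Rightarrow> ('a \<Rightarrow> nat) \<Rightarrow> real \<Rightarrow> 'a set \<Rightarrow> real" where
  "Asub y \<delta> a S = (if S = {} then 1 else a * y * ff ((a + real (sum \<delta> S)) * y - 1) (card S - 1))"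

lemma Asub_empty[simp]: "Asub y \<delta> a {} = 1" by (simp add: Asub_def)
lemma Asub_zero: "Asub y \<delta> 0 S = (if S = {} then 1 else 0)" by (simp add: Asub_def)

lemma swap_pow_sum:
  assumes "finite U"
  shows "(\<Sum>K\<in>Pow U. \<Sum>i\<in>U - K. F i K) = (\<Sum>i\<in>U. \<Sum>K\<in>Pow (U - {i}). F i K)"
proof -
  have "(\<Sum>K\<in>Pow U. \<Sum>i\<in>U - K. F i K) = (\<Sum>K\<in>Pow U. \<Sum>i\<in>U. if i \<notin> K then F i K else 0)"
    by (rule sum.cong[OF refl]) (simp add: sum.inter_filter[symmetric] assms set_diff_eq)
  also have "\<dots> = (\<Sum>i\<in>U. \<Sum>K\<in>Pow U. if i \<notin> K then F i K else 0)"
    by (rule sum.swap)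
  also have "\<dots> = (\<Sum>i\<in>U. \<Sum>K\<in>Pow (U - {i}). F i K)"
  proof (rule sum.cong[OF refl])
    fix i assume "i \<in> U"
    have "{K \<in> Pow U. i \<notin> K} = Pow (U - {i})" by auto
    then show "(\<Sum>K\<in>Pow U. if i \<notin> K then F i K else 0) = (\<Sum>K\<in>Pow (U - {i}). F i K)"
      using assms by (simp add: sum.inter_filter[symmetric])
  qed
  finally show ?thesis .
qed

lemma slot_rec:
  assumes fin: "finite U" and a: "1 \<le> a"
  shows "Asub y \<delta> (real a) U = (\<Sum>K\<in>Pow U. ff y (card K) * Asub y \<delta> (real (a - 1 + sum \<delta> K)) (U - K))"
proof (cases "U = {}")
  case True then show ?thesis by simp
next
  case False
  define n where "n = card U"
  have n1: "1 \<le> n" using False fin n_def by (simp add: Suc_le_eq card_gt_0_iff)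
  define M where "M = real (a - 1 + sum \<delta> U)"
  define g where "g (K::'a set) = ff y (card K) * ff (M * y) (n - card K)" for K
  define h where "h (K::'a set) = ff y (card K) * y * ff (M * y - 1) (n - 1 - card K) * real (sum \<delta> (U - K))" for K
  have tmK: "ff y (card K) * Asub y \<delta> (real (a - 1 + sum \<delta> K)) (U - K) = g K - h K" if K: "K \<in> Pow U" for K
  proof (cases "K = U")
    case True then show ?thesis by (simp add: g_def h_def n_def)
  next
    case False
    have KU: "K \<subseteq> U" using K by auto
    have finK: "finite K" using KU fin finite_subset by blast
    have ne: "U - K \<noteq> {}" using KU False by auto
    have cd: "card (U - K) = n - card K" using KU finK n_def by (simp add: card_Diff_subset)
    have cl: "card K < n" using KU False fin n_def psubset_card_mono by auto
    have sd: "sum \<delta> U = sum \<delta> K + sum \<delta> (U - K)" using sum.subset_diff[OF KU fin, of \<delta>] by simp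
    have Mc: "real (a - 1 + sum \<delta> K) + real (sum \<delta> (U - K)) = M" using sd a by (simp add: M_def)
    have e: "n - card K = Suc (n - 1 - card K)" using cl by simp
    have A1: "Asub y \<delta> (real (a - 1 + sum \<delta> K)) (U - K)
        = real (a - 1 + sum \<delta> K) * y * ff (M * y - 1) (n - 1 - card K)"
      unfolding Asub_def using ne cd Mc by (simp add: algebra_simps)
    have A2: "real (a - 1 + sum \<delta> K) = M - real (sum \<delta> (U - K))" using Mc by simp
    have X: "Asub y \<delta> (real (a - 1 + sum \<delta> K)) (U - K)
        = (M - real (sum \<delta> (U - K))) * y * ff (M * y - 1) (n - 1 - card K)"
      using A1 unfolding A2 .
    show ?thesis unfolding g_def h_def e ff_Suc' X by (simp add: algebra_simps)
  qed
  have sg: "(\<Sum>K\<in>Pow U. g K) = ff (y + M * y) n"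
    unfolding g_def n_def by (rule vandermonde_subsets[OF fin])
  have sh: "(\<Sum>K\<in>Pow U. h K) = y * real (sum \<delta> U) * ff (y + M * y - 1) (n - 1)"
  proof -
    have "(\<Sum>K\<in>Pow U. h K) = (\<Sum>K\<in>Pow U. \<Sum>i\<in>U - K. real (\<delta> i) * (y * (ff y (card K) * ff (M * y - 1) (n - 1 - card K))))"
      unfolding h_def by (rule sum.cong[OF refl]) (simp add: sum_distrib_left sum_distrib_right mult_ac)
    also have "\<dots> = (\<Sum>i\<in>U. \<Sum>K\<in>Pow (U - {i}). real (\<delta> i) * (y * (ff y (card K) * ff (M * y - 1) (n - 1 - card K))))"
      by (rule swap_pow_sum[OF fin])
    also have "\<dots> = (\<Sum>i\<in>U. real (\<delta> i) * (y * ff (y + (M * y - 1)) (n - 1)))"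
    proof (rule sum.cong[OF refl])
      fix i assume i: "i \<in> U"
      have c: "card (U - {i}) = n - 1" using i fin n_def by simp
      show "(\<Sum>K\<in>Pow (U - {i}). real (\<delta> i) * (y * (ff y (card K) * ff (M * y - 1) (n - 1 - card K))))
          = real (\<delta> i) * (y * ff (y + (M * y - 1)) (n - 1))"
        using vandermonde_subsets[of "U - {i}" y "M * y - 1"] fin c
        by (simp add: sum_distrib_left[symmetric])
    qed
    also have "\<dots> = y * real (sum \<delta> U) * ff (y + M * y - 1) (n - 1)"
      by (simp add: sum_distrib_left sum_distrib_right mult_ac add_diff_eq)
    finally show ?thesis .
  qed
  have "(\<Sum>K\<in>Pow U. ff y (card K) * Asub y \<delta> (real (a - 1 + sum \<delta> K)) (U - K))
      = (\<Sum>K\<in>Pow U. g K) - (\<Sum>K\<in>Pow U. h K)"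
    unfolding sum_subtractf[symmetric] by (rule sum.cong[OF refl], rule tmK)
  also have "\<dots> = (M + 1) * y * ff ((M + 1) * y - 1) (n - 1) - y * real (sum \<delta> U) * ff ((M + 1) * y - 1) (n - 1)"
  proof -
    have "ff (y + M * y) n = (y + M * y) * ff (y + M * y - 1) (n - 1)"
      using n1 ff_Suc'[of _ "n - 1"] by (metis Suc_diff_1 One_nat_def le_simps(3) less_one not_less)
    then show ?thesis unfolding sg sh by (simp add: algebra_simps)
  qed
  also have "\<dots> = real a * y * ff ((real a + real (sum \<delta> U)) * y - 1) (n - 1)"
    using a by (simp add: M_def algebra_simps of_nat_diff)
  also have "\<dots> = Asub y \<delta> (real a) U" using False by (simp add: Asub_def n_def)
  finally show ?thesis by simp
qed


lemma reindex_pow: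
  assumes fin: "finite U"
  shows "(\<Sum>K\<in>Pow U. \<Sum>S'\<in>Pow (U - K). g K S') = (\<Sum>S\<in>Pow U. \<Sum>K\<in>Pow S. g K (S - K))"
proof -
  have "(\<Sum>K\<in>Pow U. \<Sum>S'\<in>Pow (U - K). g K S') = (\<Sum>(K, S')\<in>Sigma (Pow U) (\<lambda>K. Pow (U - K)). g K S')"
    using fin by (intro sum.Sigma) auto
  also have "\<dots> = (\<Sum>(S, K)\<in>Sigma (Pow U) Pow. g K (S - K))"
  proof -
    have dj: "\<And>A B. B \<subseteq> U - A \<Longrightarrow> A \<union> B - A = B" by blast
    show ?thesis
      by (rule sum.reindex_bij_witness[where i = "\<lambda>(S, K). (K, S - K)" and j = "\<lambda>(K, S'). (K \<union> S', K)"]) (auto simp: dj)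
  qed
  also have "\<dots> = (\<Sum>S\<in>Pow U. \<Sum>K\<in>Pow S. g K (S - K))"
    using fin by (intro sum.Sigma[symmetric]) (auto intro: finite_subset)
  finally show ?thesis .
qed

lemma conv_sub:
  assumes "finite U"
  shows "Asub y \<delta> (real (a + b)) U = (\<Sum>S\<in>Pow U. Asub y \<delta> (real a) S * Asub y \<delta> (real b) (U - S))"
  using assms
proof (induction "a + sum \<delta> U" arbitrary: a b U rule: less_induct)
  case less
  show ?case
  proof (cases "a = 0")
    case True
    have "(\<Sum>S\<in>Pow (U::'a set). Asub y \<delta> (real a) S * Asub y \<delta> (real b) (U - S))
        = (\<Sum>S\<in>Pow U. if {} = S then Asub y \<delta> (real b) (U - S) else 0)"
      by (rule sum.cong[OF refl]) (auto simp: True Asub_zero)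
    also have "\<dots> = Asub y \<delta> (real b) U" using less.prems by (simp add: sum.delta sum.delta')
    finally show ?thesis using True by simp
  next
    case False
    then have a1: "1 \<le> a" by simp
    have "Asub y \<delta> (real (a + b)) U
        = (\<Sum>K\<in>Pow U. ff y (card K) * Asub y \<delta> (real ((a - 1 + sum \<delta> K) + b)) (U - K))"
      using slot_rec[OF less.prems, of "a + b" y \<delta>] a1 by (simp add: algebra_simps)
    also have "\<dots> = (\<Sum>K\<in>Pow U. \<Sum>S'\<in>Pow (U - K). ff y (card K) * Asub y \<delta> (real (a - 1 + sum \<delta> K)) S'
                       * Asub y \<delta> (real b) (U - K - S'))"
    proof (rule sum.cong[OF refl])
      fix K assume K: "K \<in> Pow U"
      have KU: "K \<subseteq> U" using K by auto
      have sd: "sum \<delta> U = sum \<delta> (U - K) + sum \<delta> K"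
        using sum.subset_diff[OF KU less.prems, of \<delta>] by simp
      have lt: "a - 1 + sum \<delta> K + sum \<delta> (U - K) < a + sum \<delta> U" using sd a1 by simp
      have fK: "finite (U - K)" using less.prems by simp
      show "ff y (card K) * Asub y \<delta> (real ((a - 1 + sum \<delta> K) + b)) (U - K)
          = (\<Sum>S'\<in>Pow (U - K). ff y (card K) * Asub y \<delta> (real (a - 1 + sum \<delta> K)) S'
                       * Asub y \<delta> (real b) (U - K - S'))"
        unfolding less.hyps[OF lt fK] by (simp add: sum_distrib_left mult.assoc)
    qed
    also have "\<dots> = (\<Sum>S\<in>Pow U. \<Sum>K\<in>Pow S. ff y (card K) * Asub y \<delta> (real (a - 1 + sum \<delta> K)) (S - K)
                       * Asub y \<delta> (real b) (U - K - (S - K)))"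
      by (rule reindex_pow[OF less.prems])
    also have "\<dots> = (\<Sum>S\<in>Pow U. Asub y \<delta> (real a) S * Asub y \<delta> (real b) (U - S))"
    proof (rule sum.cong[OF refl])
      fix S assume S: "S \<in> Pow U"
      have fS: "finite S" using S less.prems by (auto intro: finite_subset)
      have "(\<Sum>K\<in>Pow S. ff y (card K) * Asub y \<delta> (real (a - 1 + sum \<delta> K)) (S - K)
                       * Asub y \<delta> (real b) (U - K - (S - K)))
          = (\<Sum>K\<in>Pow S. ff y (card K) * Asub y \<delta> (real (a - 1 + sum \<delta> K)) (S - K)) * Asub y \<delta> (real b) (U - S)"
        unfolding sum_distrib_right
        by (rule sum.cong[OF refl]) (use S in \<open>auto intro!: arg_cong[where f = "Asub y \<delta> (real b)"]\<close>)
      also have "\<dots> = Asub y \<delta> (real a) S * Asub y \<delta> (real b) (U - S)"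
        using slot_rec[OF fS a1, of y \<delta>] by simp
      finally show "(\<Sum>K\<in>Pow S. ff y (card K) * Asub y \<delta> (real (a - 1 + sum \<delta> K)) (S - K)
                       * Asub y \<delta> (real b) (U - K - (S - K))) = Asub y \<delta> (real a) S * Asub y \<delta> (real b) (U - S)" .
    qed
    finally show ?thesis .
  qed
qed

definition mbin :: "nat multiset \<Rightarrow> nat multiset \<Rightarrow> nat" where
  "mbin \<rho> \<sigma> = (\<Prod>e\<in>set_mset \<rho> \<union> set_mset \<sigma>. count \<rho> e choose count \<sigma> e)"

lemma mbin_superset:
  assumes "finite D" "set_mset \<rho> \<union> set_mset \<sigma> \<subseteq> D"
  shows "mbin \<rho> \<sigma> = (\<Prod>e\<in>D. count \<rho> e choose count \<sigma> e)"
  unfolding mbin_def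
  by (rule prod.mono_neutral_left[OF assms(1) assms(2)]) (auto simp: not_in_iff)

lemma mbin_zero:
  assumes "\<not> \<sigma> \<subseteq># \<rho>"
  shows "mbin \<rho> \<sigma> = 0"
proof -
  obtain e where e: "count \<rho> e < count \<sigma> e" using assms by (meson not_le subseteq_mset_def)
  then have "0 < count \<sigma> e" by (rule le_less_trans[OF le0])
  then have "e \<in> set_mset \<rho> \<union> set_mset \<sigma>" by (simp only: count_greater_zero_iff UnI2)
  moreover have "(count \<rho> e choose count \<sigma> e) = 0" using e by simp
  ultimately show ?thesis unfolding mbin_def
    by (meson finite_Un finite_set_mset prod_zero_iff)
qed

lemma mbin_pascal:
  "mbin (add_mset d \<rho>) \<sigma> = mbin \<rho> \<sigma> + (if d \<in># \<sigma> then mbin \<rho> (\<sigma> - {#d#}) else 0)"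
proof -
  define D where "D = set_mset (add_mset d \<rho>) \<union> set_mset \<sigma>"
  have fD: "finite D" by (simp add: D_def)
  have dD: "d \<in> D" by (simp add: D_def)
  have m1: "mbin (add_mset d \<rho>) \<sigma> = (\<Prod>e\<in>D. count (add_mset d \<rho>) e choose count \<sigma> e)"
    by (rule mbin_superset[OF fD]) (auto simp: D_def)
  have m2: "mbin \<rho> \<sigma> = (\<Prod>e\<in>D. count \<rho> e choose count \<sigma> e)"
    by (rule mbin_superset[OF fD]) (auto simp: D_def)
  define P where "P = (\<Prod>e\<in>D - {d}. count \<rho> e choose count \<sigma> e)"
  have p1: "mbin (add_mset d \<rho>) \<sigma> = (Suc (count \<rho> d) choose count \<sigma> d) * P"
    unfolding m1 P_def prod.remove[OF fD dD] by (auto intro!: prod.cong)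
  have p2: "mbin \<rho> \<sigma> = (count \<rho> d choose count \<sigma> d) * P"
    unfolding m2 P_def prod.remove[OF fD dD] by simp
  show ?thesis
  proof (cases "d \<in># \<sigma>")
    case False
    then have "count \<sigma> d = 0" by (simp add: not_in_iff)
    then show ?thesis using p1 p2 False by simp
  next
    case True
    have m3: "mbin \<rho> (\<sigma> - {#d#}) = (\<Prod>e\<in>D. count \<rho> e choose count (\<sigma> - {#d#}) e)"
      by (rule mbin_superset[OF fD]) (auto simp: D_def dest: in_diffD)
    have p3: "mbin \<rho> (\<sigma> - {#d#}) = (count \<rho> d choose (count \<sigma> d - 1)) * P"
      unfolding m3 P_def prod.remove[OF fD dD] by (auto intro!: prod.cong)
    obtain k where k: "count \<sigma> d = Suc k" using True by (metis count_greater_zero_iff not0_implies_Suc gr0_conv_Suc)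
    show ?thesis using p1 p2 p3 True k by (simp add: algebra_simps)
  qed
qed

lemma finite_submsets: "finite {\<sigma>. \<sigma> \<subseteq># (\<rho>::'a multiset)}"
proof (induction \<rho>)
  case empty then show ?case by simp
next
  case (add x \<rho>)
  have "{\<sigma>. \<sigma> \<subseteq># add_mset x \<rho>} \<subseteq> {\<sigma>. \<sigma> \<subseteq># \<rho>} \<union> add_mset x ` {\<sigma>. \<sigma> \<subseteq># \<rho>}"
  proof
    fix \<sigma> assume "\<sigma> \<in> {\<sigma>. \<sigma> \<subseteq># add_mset x \<rho>}"
    then have s: "\<sigma> \<subseteq># add_mset x \<rho>" by simp
    show "\<sigma> \<in> {\<sigma>. \<sigma> \<subseteq># \<rho>} \<union> add_mset x ` {\<sigma>. \<sigma> \<subseteq># \<rho>}"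
    proof (cases "x \<in># \<sigma>")
      case True
      then have "\<sigma> = add_mset x (\<sigma> - {#x#})" by simp
      moreover have "\<sigma> - {#x#} \<subseteq># \<rho>" using s
        by (simp add: subset_eq_diff_conv)
      ultimately show ?thesis by blast
    next
      case False
      have "count \<sigma> a \<le> count \<rho> a" for a
      proof (cases "a = x")
        case True then show ?thesis using False by (simp add: not_in_iff)
      next
        case F2: False then show ?thesis using s by (auto simp: subseteq_mset_def dest: spec[of _ a])
      qed
      then have "\<sigma> \<subseteq># \<rho>" by (simp add: subseteq_mset_def)
      then show ?thesis by blast
    qed
  qed
  moreover have "finite ({\<sigma>. \<sigma> \<subseteq># \<rho>} \<union> add_mset x ` {\<sigma>. \<sigma> \<subseteq># \<rho>})" using add by simp
  ultimately show ?case by (rule finite_subset)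
qed


lemma conversion:
  fixes G :: "nat multiset \<Rightarrow> real" and lab :: "'a \<Rightarrow> nat"
  assumes "finite U"
  shows "(\<Sum>\<sigma>\<in>{\<sigma>. \<sigma> \<subseteq># image_mset lab (mset_set U)}. G \<sigma> * real (mbin (image_mset lab (mset_set U)) \<sigma>))
       = (\<Sum>S\<in>Pow U. G (image_mset lab (mset_set S)))"
  using assms
proof (induction U arbitrary: G rule: finite_induct)
  case empty
  have "{\<sigma>. \<sigma> \<subseteq># ({#}::nat multiset)} = {{#}}" by auto
  then show ?case by (simp add: mbin_def)
next
  case (insert x U)
  define \<rho> where "\<rho> = image_mset lab (mset_set U)"
  define d where "d = lab x"
  define A where "A = {\<sigma>. \<sigma> \<subseteq># \<rho>}"
  define A' where "A' = {\<sigma>. \<sigma> \<subseteq># add_mset d \<rho>}"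
  have img: "image_mset lab (mset_set (insert x U)) = add_mset d \<rho>"
    using insert by (simp add: \<rho>_def d_def)
  have fA': "finite A'" unfolding A'_def by (rule finite_submsets)
  have fA: "finite A" unfolding A_def by (rule finite_submsets)
  have AA': "A \<subseteq> A'" unfolding A_def A'_def by (auto intro: subset_mset.order_trans)
  have "(\<Sum>\<sigma>\<in>A'. G \<sigma> * real (mbin (add_mset d \<rho>) \<sigma>))
      = (\<Sum>\<sigma>\<in>A'. G \<sigma> * real (mbin \<rho> \<sigma>)) + (\<Sum>\<sigma>\<in>A'. if d \<in># \<sigma> then G \<sigma> * real (mbin \<rho> (\<sigma> - {#d#})) else 0)"
    unfolding sum.distrib[symmetric] by (rule sum.cong[OF refl]) (simp add: mbin_pascal algebra_simps)
  also have "(\<Sum>\<sigma>\<in>A'. G \<sigma> * real (mbin \<rho> \<sigma>)) = (\<Sum>\<sigma>\<in>A. G \<sigma> * real (mbin \<rho> \<sigma>))"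
    by (rule sum.mono_neutral_right[OF fA' AA']) (auto simp: A_def mbin_zero)
  also have "(\<Sum>\<sigma>\<in>A'. if d \<in># \<sigma> then G \<sigma> * real (mbin \<rho> (\<sigma> - {#d#})) else 0)
      = (\<Sum>\<sigma>\<in>{\<sigma>\<in>A'. d \<in># \<sigma>}. G \<sigma> * real (mbin \<rho> (\<sigma> - {#d#})))"
    using fA' by (simp add: sum.inter_filter)
  also have "\<dots> = (\<Sum>\<tau>\<in>A. G (add_mset d \<tau>) * real (mbin \<rho> \<tau>))"
  proof (rule sum.reindex_bij_witness[where i = "\<lambda>\<tau>. add_mset d \<tau>" and j = "\<lambda>\<sigma>. \<sigma> - {#d#}"])
    fix \<sigma> assume "\<sigma> \<in> {\<sigma>\<in>A'. d \<in># \<sigma>}"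
    then have s: "\<sigma> \<subseteq># add_mset d \<rho>" "d \<in># \<sigma>" by (auto simp: A'_def)
    show "add_mset d (\<sigma> - {#d#}) = \<sigma>" using s by simp
    show "\<sigma> - {#d#} \<in> A" using s by (simp add: A_def subset_eq_diff_conv)
    show "G (add_mset d (\<sigma> - {#d#})) * real (mbin \<rho> (\<sigma> - {#d#})) = G \<sigma> * real (mbin \<rho> (\<sigma> - {#d#}))"
      using s by simp
  next
    fix \<tau> assume "\<tau> \<in> A"
    then show "add_mset d \<tau> - {#d#} = \<tau>" "add_mset d \<tau> \<in> {\<sigma>\<in>A'. d \<in># \<sigma>}"
      by (auto simp: A_def A'_def mset_subset_eq_add_mset_cancel)
  qed
  also have "(\<Sum>\<sigma>\<in>A. G \<sigma> * real (mbin \<rho> \<sigma>)) = (\<Sum>S\<in>Pow U. G (image_mset lab (mset_set S)))"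
    unfolding A_def \<rho>_def by (rule insert.IH)
  also have "(\<Sum>\<tau>\<in>A. G (add_mset d \<tau>) * real (mbin \<rho> \<tau>)) = (\<Sum>S\<in>Pow U. G (add_mset d (image_mset lab (mset_set S))))"
    unfolding A_def \<rho>_def by (rule insert.IH)
  also have "(\<Sum>S\<in>Pow U. G (image_mset lab (mset_set S))) + (\<Sum>S\<in>Pow U. G (add_mset d (image_mset lab (mset_set S))))
      = (\<Sum>S\<in>Pow (insert x U). G (image_mset lab (mset_set S)))"
  proof -
    have disj: "Pow U \<inter> insert x ` Pow U = {}" using insert by auto
    have inj: "inj_on (insert x) (Pow U)" unfolding inj_on_def using insert.hyps(2)
      by (metis Diff_insert_absorb PowD subsetD)
    have e: "S \<in> Pow U \<Longrightarrow> image_mset lab (mset_set (insert x S)) = add_mset d (image_mset lab (mset_set S))" for S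
    proof -
      assume "S \<in> Pow U"
      then have "finite S" "x \<notin> S" using insert.hyps by (auto intro: finite_subset)
      then show ?thesis by (simp add: d_def)
    qed
    have "(\<Sum>S\<in>Pow (insert x U). G (image_mset lab (mset_set S)))
        = (\<Sum>S\<in>Pow U. G (image_mset lab (mset_set S))) + (\<Sum>S\<in>insert x ` Pow U. G (image_mset lab (mset_set S)))"
      using insert disj by (simp add: Pow_insert sum.union_disjoint)
    also have "(\<Sum>S\<in>insert x ` Pow U. G (image_mset lab (mset_set S))) = (\<Sum>S\<in>Pow U. G (add_mset d (image_mset lab (mset_set S))))"
      by (simp add: sum.reindex[OF inj] e)
    finally show ?thesis by simp
  qed
  finally show ?case unfolding img A'_def .
qed

definition Dm :: "nat multiset \<Rightarrow> nat" where
  "Dm \<sigma> = sum_mset (image_mset (\<lambda>d. d - 1) \<sigma>)"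

definition Atil :: "real \<Rightarrow> real \<Rightarrow> nat multiset \<Rightarrow> real" where
  "Atil y a \<sigma> = (if \<sigma> = {#} then 1 else a * y * ff ((a + real (Dm \<sigma>)) * y - 1) (size \<sigma> - 1))"

definition mf :: "nat multiset \<Rightarrow> real" where
  "mf \<sigma> = (\<Prod>d\<in>set_mset \<sigma>. real (fact (count \<sigma> d)))"

lemma mf_superset:
  assumes "finite D" "set_mset \<sigma> \<subseteq> D"
  shows "mf \<sigma> = (\<Prod>d\<in>D. real (fact (count \<sigma> d)))"
  unfolding mf_def by (rule prod.mono_neutral_left[OF assms]) (auto simp: not_in_iff)

lemma mf_pos: "mf \<sigma> > 0"
  unfolding mf_def by (rule prod_pos) simp

lemma mbin_mf:
  assumes "\<sigma> \<subseteq># \<rho>"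
  shows "real (mbin \<rho> \<sigma>) * mf \<sigma> * mf (\<rho> - \<sigma>) = mf \<rho>"
proof -
  define D where "D = set_mset \<rho>"
  have fD: "finite D" by (simp add: D_def)
  have s1: "set_mset \<sigma> \<subseteq> D" using assms D_def by (simp add: mset_subset_eqD subsetI)
  have s2: "set_mset (\<rho> - \<sigma>) \<subseteq> D" using D_def by (auto dest: in_diffD)
  have "real (mbin \<rho> \<sigma>) * mf \<sigma> * mf (\<rho> - \<sigma>)
      = (\<Prod>d\<in>D. real (count \<rho> d choose count \<sigma> d) * real (fact (count \<sigma> d)) * real (fact (count (\<rho> - \<sigma>) d)))"
  proof -
    have mb: "mbin \<rho> \<sigma> = (\<Prod>d\<in>D. count \<rho> d choose count \<sigma> d)"
      by (rule mbin_superset[OF fD]) (use s1 in \<open>auto simp: D_def\<close>)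
    show ?thesis unfolding mb mf_superset[OF fD s1] mf_superset[OF fD s2]
      by (simp add: prod.distrib)
  qed
  also have "\<dots> = (\<Prod>d\<in>D. real (fact (count \<rho> d)))"
  proof (rule prod.cong[OF refl])
    fix d
    have le: "count \<sigma> d \<le> count \<rho> d" using assms by (simp add: subseteq_mset_def)
    have "fact (count \<sigma> d) * fact (count \<rho> d - count \<sigma> d) * (count \<rho> d choose count \<sigma> d) = (fact (count \<rho> d) :: nat)"
      by (rule binomial_fact_lemma[OF le])
    then have "real (fact (count \<sigma> d) * fact (count \<rho> d - count \<sigma> d) * (count \<rho> d choose count \<sigma> d)) = real (fact (count \<rho> d))"
      by simp
    then show "real (count \<rho> d choose count \<sigma> d) * real (fact (count \<sigma> d)) * real (fact (count (\<rho> - \<sigma>) d)) = real (fact (count \<rho> d))"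
      by (simp only: of_nat_mult count_diff) (simp add: algebra_simps)
  qed
  also have "\<dots> = mf \<rho>" unfolding mf_def D_def ..
  finally show ?thesis .
qed

lemma Atil_Asub:
  assumes "finite S"
  shows "Atil y a (image_mset lab (mset_set S)) = Asub y (\<lambda>i. lab i - 1) a S"
proof -
  have "Dm (image_mset lab (mset_set S)) = sum (\<lambda>i. lab i - 1) S"
    unfolding Dm_def by (simp add: image_mset.compositionality sum_unfold_sum_mset comp_def)
  then show ?thesis using assms by (simp add: Atil_def Asub_def mset_set_empty_iff)
qed

lemma mset_as_image:
  obtains U :: "nat set" and lab where "finite U" "\<rho> = image_mset lab (mset_set U)"
proof -
  obtain L where L: "mset L = \<rho>" using ex_mset by blast
  have "\<rho> = image_mset (nth L) (mset_set {..<length L})"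
    unfolding L[symmetric]
    by (metis map_nth mset_map mset_upt atLeast0LessThan)
  then show ?thesis using that by blast
qed

lemma conv_mset:
  fixes a b :: nat
  shows "(\<Sum>\<sigma>\<in>{\<sigma>. \<sigma> \<subseteq># \<rho>}. (Atil y (real a) \<sigma> / mf \<sigma>) * (Atil y (real b) (\<rho> - \<sigma>) / mf (\<rho> - \<sigma>)))
       = Atil y (real (a + b)) \<rho> / mf \<rho>"
proof -
  obtain U :: "nat set" and lab where fU: "finite U" and rho: "\<rho> = image_mset lab (mset_set U)"
    by (rule mset_as_image)
  have "(\<Sum>\<sigma>\<in>{\<sigma>. \<sigma> \<subseteq># \<rho>}. (Atil y (real a) \<sigma> / mf \<sigma>) * (Atil y (real b) (\<rho> - \<sigma>) / mf (\<rho> - \<sigma>)))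
      = (\<Sum>\<sigma>\<in>{\<sigma>. \<sigma> \<subseteq># \<rho>}. (Atil y (real a) \<sigma> * Atil y (real b) (\<rho> - \<sigma>)) * real (mbin \<rho> \<sigma>)) / mf \<rho>"
    unfolding sum_divide_distrib
  proof (rule sum.cong[OF refl])
    fix \<sigma> assume "\<sigma> \<in> {\<sigma>. \<sigma> \<subseteq># \<rho>}"
    then have e: "real (mbin \<rho> \<sigma>) * mf \<sigma> * mf (\<rho> - \<sigma>) = mf \<rho>" by (simp add: mbin_mf)
    have p: "mf \<sigma> > 0" "mf (\<rho> - \<sigma>) > 0" by (simp_all add: mf_pos)
    have nz: "mbin \<rho> \<sigma> \<noteq> 0"
    proof
      assume "mbin \<rho> \<sigma> = 0"
      then show False using e mf_pos[of \<rho>] by simp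
    qed
    show "Atil y (real a) \<sigma> / mf \<sigma> * (Atil y (real b) (\<rho> - \<sigma>) / mf (\<rho> - \<sigma>))
        = Atil y (real a) \<sigma> * Atil y (real b) (\<rho> - \<sigma>) * real (mbin \<rho> \<sigma>) / mf \<rho>"
      unfolding e[symmetric] using p nz by (simp add: field_simps)
  qed
  also have "(\<Sum>\<sigma>\<in>{\<sigma>. \<sigma> \<subseteq># \<rho>}. (Atil y (real a) \<sigma> * Atil y (real b) (\<rho> - \<sigma>)) * real (mbin \<rho> \<sigma>))
      = (\<Sum>S\<in>Pow U. Atil y (real a) (image_mset lab (mset_set S)) * Atil y (real b) (\<rho> - image_mset lab (mset_set S)))"
    unfolding rho by (rule conversion[OF fU])
  also have "\<dots> = (\<Sum>S\<in>Pow U. Asub y (\<lambda>i. lab i - 1) (real a) S * Asub y (\<lambda>i. lab i - 1) (real b) (U - S))"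
  proof (rule sum.cong[OF refl])
    fix S assume S: "S \<in> Pow U"
    have fS: "finite S" using S fU by (auto intro: finite_subset)
    have fS': "finite (U - S)" using fU by simp
    have "mset_set U = mset_set S + mset_set (U - S)"
      using mset_set_Union[OF fS fS', of] S by (auto simp: Un_absorb1 Un_Diff_cancel)
    then have d: "\<rho> - image_mset lab (mset_set S) = image_mset lab (mset_set (U - S))"
      unfolding rho by simp
    show "Atil y (real a) (image_mset lab (mset_set S)) * Atil y (real b) (\<rho> - image_mset lab (mset_set S))
        = Asub y (\<lambda>i. lab i - 1) (real a) S * Asub y (\<lambda>i. lab i - 1) (real b) (U - S)"
      unfolding d Atil_Asub[OF fS] Atil_Asub[OF fS'] ..
  qed
  also have "\<dots> = Asub y (\<lambda>i. lab i - 1) (real (a + b)) U"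
    by (rule conv_sub[OF fU, symmetric])
  also have "\<dots> = Atil y (real (a + b)) \<rho>"
    unfolding rho Atil_Asub[OF fU] ..
  finally show ?thesis .
qed

definition intl :: "nat multiset \<Rightarrow> nat multiset" where
  "intl M = filter_mset (\<lambda>d. d \<noteq> 0) M"

definition ellm :: "nat multiset \<Rightarrow> int" where
  "ellm M = int (count M 0) - int (Dm (intl M))"

definition RM :: "nat multiset \<Rightarrow> real poly" where
  "RM M = smult (real_of_int (ell_of (count M)) / real (count M 0)
                  / (\<Prod>d\<in>{d. 1 \<le> d \<and> count M d \<noteq> 0}. real (fact (count M d))))
               (\<Prod>k<n_of (count M). [: - real k, real (count M 0) :])"

lemma sum_count_mset:
  fixes f :: "nat \<Rightarrow> 'b::comm_ring_1"
  assumes "finite D" "set_mset M \<subseteq> D"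
  shows "(\<Sum>d\<in>D. of_nat (count M d) * f d) = sum_mset (image_mset f M)"
  using assms(2)
proof (induction M)
  case empty then show ?case by simp
next
  case (add x M)
  have xD: "x \<in> D" using add.prems by simp
  have "(\<Sum>d\<in>D. of_nat (count (add_mset x M) d) * f d)
      = (\<Sum>d\<in>D. of_nat (count M d) * f d) + (\<Sum>d\<in>D. if d = x then f d else 0)"
    unfolding sum.distrib[symmetric] by (rule sum.cong[OF refl]) (simp add: algebra_simps)
  also have "\<dots> = sum_mset (image_mset f M) + f x"
    using add assms(1) xD by (simp add: sum.delta)
  finally show ?case by (simp add: add.commute)
qed

lemma count_intl: "count (intl M) d = (if d = 0 then 0 else count M d)"
  by (simp add: intl_def)

lemma set_intl: "set_mset (intl M) = {d. 1 \<le> d \<and> count M d \<noteq> 0}"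
  by (auto simp: intl_def)

lemma intl_add[simp]: "intl (A + B) = intl A + intl B" by (simp add: intl_def)
lemma Dm_add[simp]: "Dm (A + B) = Dm A + Dm B" by (simp add: Dm_def)
lemma ellm_add: "ellm (A + B) = ellm A + ellm B" by (simp add: ellm_def)

lemma ell_of_ellm: "ell_of (count M) = ellm M"
proof -
  have "ell_of (count M) = - sum_mset (image_mset (\<lambda>d. int d - 1) M)"
    unfolding ell_of_def
    by (subst sum_count_mset[symmetric, where D = "set_mset M"]) (auto simp: mult.commute intro!: sum.cong)
  also have "\<dots> = ellm M"
    unfolding ellm_def Dm_def intl_def
    by (induction M) auto
  finally show ?thesis .
qed

lemma n_of_size: "n_of (count M) = size (intl M)"
proof -
  have "n_of (count M) = (\<Sum>d\<in>set_mset (intl M). of_nat (count (intl M) d) * (1::int))"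
    unfolding n_of_def set_intl[symmetric] by (simp, rule sum.cong[OF refl]) (auto simp: intl_def)
  also have "\<dots> = int (size (intl M))"
    by (subst sum_count_mset) (simp_all add: size_multiset_overloaded_eq sum_mset_constant)
  finally show ?thesis by simp
qed

lemma mf_intl: "(\<Prod>d\<in>{d. 1 \<le> d \<and> count M d \<noteq> 0}. real (fact (count M d))) = mf (intl M)"
  unfolding mf_def set_intl[symmetric] by (rule prod.cong[OF refl]) (auto simp: count_intl intl_def)

lemma poly_RM:
  "poly (RM M) y = real_of_int (ellm M) / real (count M 0) / mf (intl M) * ff (real (count M 0) * y) (size (intl M))"
  unfolding RM_def ell_of_ellm n_of_size mf_intl
  by (simp add: poly_prod ff_def algebra_simps)

lemma count0_ellm: "int (count M 0) = ellm M + int (Dm (intl M))"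
  by (simp add: ellm_def)

lemma poly_RM_Atil:
  assumes "ellm M = int a" "1 \<le> a"
  shows "poly (RM M) y = Atil y (real a) (intl M) / mf (intl M)"
proof -
  define c where "c = count M 0"
  have c: "real c = real a + real (Dm (intl M))" using count0_ellm[of M] assms(1) c_def by simp
  have cpos: "real c > 0" using c assms(2) by simp
  show ?thesis
  proof (cases "intl M = {#}")
    case True
    then have "real c = real a" using c by (simp add: Dm_def)
    then show ?thesis using True assms cpos by (simp add: poly_RM Atil_def c_def[symmetric])
  next
    case False
    then obtain m where m: "size (intl M) = Suc m" by (metis size_eq_0_iff_empty not0_implies_Suc)
    have "poly (RM M) y = real a / real c / mf (intl M) * (real c * y * ff (real c * y - 1) m)"
      unfolding poly_RM m ff_Suc' c_def using assms by simp
    also have "\<dots> = real a * y * ff (real c * y - 1) m / mf (intl M)"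
      using cpos mf_pos[of "intl M"] by (simp add: field_simps)
    also have "\<dots> = real a * y * ff ((real a + real (Dm (intl M))) * y - 1) m / mf (intl M)"
      unfolding c ..
    finally show ?thesis using False m by (simp add: Atil_def)
  qed
qed

lemma mset_split0: "M = intl M + replicate_mset (count M 0) 0"
  by (auto simp: multiset_eq_iff intl_def)

lemma intl_rep[simp]: "intl (replicate_mset k 0) = {#}"
  by (auto simp: intl_def multiset_eq_iff)

lemma intl_id: "0 \<notin># \<sigma> \<Longrightarrow> intl \<sigma> = \<sigma>"
  by (auto simp: intl_def multiset_eq_iff not_in_iff)

lemma intl_empty[simp]: "intl {#} = {#}" by (simp add: intl_def)

lemma intl_idem[simp]: "intl (intl M) = intl M"
  by (auto simp: intl_def multiset_eq_iff)

lemma intl_add_mset[simp]: "intl (add_mset d M) = (if d = 0 then intl M else add_mset d (intl M))"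
  by (simp add: intl_def)

lemma zero_notin_intl: "0 \<notin># intl M" by (simp add: intl_def)

lemma intl_mono: "s \<subseteq># M \<Longrightarrow> intl s \<subseteq># intl M"
  by (simp add: intl_def multiset_filter_mono)

lemma Dm_mono: "\<sigma> \<subseteq># \<rho> \<Longrightarrow> Dm \<sigma> \<le> Dm \<rho>"
  by (metis Dm_add le_add1 subset_mset.add_diff_inverse)

lemma ellm_rep: "ellm (\<sigma> + replicate_mset k 0) = int k - int (Dm (intl \<sigma>)) + int (count \<sigma> 0)"
  by (simp add: ellm_def)

lemma alg_conv:
  assumes l: "ellm M = int l" "2 \<le> l"
  shows "(\<Sum>s\<in>{s. s \<subseteq># M \<and> ellm s = 1}. RM s * RM (M - s)) = RM M"
proof -
  define \<rho> where "\<rho> = intl M"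
  have "poly (\<Sum>s\<in>{s. s \<subseteq># M \<and> ellm s = 1}. RM s * RM (M - s)) y = poly (RM M) y" for y
  proof -
    define F where "F \<sigma> = (Atil y (real 1) \<sigma> / mf \<sigma>) * (Atil y (real (l - 1)) (\<rho> - \<sigma>) / mf (\<rho> - \<sigma>))" for \<sigma>
    have "poly (\<Sum>s\<in>{s. s \<subseteq># M \<and> ellm s = 1}. RM s * RM (M - s)) y
        = (\<Sum>s\<in>{s. s \<subseteq># M \<and> ellm s = 1}. poly (RM s) y * poly (RM (M - s)) y)"
      by (simp add: poly_sum)
    also have "\<dots> = (\<Sum>\<sigma>\<in>{\<sigma>. \<sigma> \<subseteq># \<rho>}. F \<sigma>)"
    proof (rule sum.reindex_bij_witness[where i = "\<lambda>\<sigma>. \<sigma> + replicate_mset (Suc (Dm \<sigma>)) 0" and j = intl])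
      fix s assume "s \<in> {s. s \<subseteq># M \<and> ellm s = 1}"
      then have s: "s \<subseteq># M" "ellm s = 1" by auto
      have c0: "count s 0 = Suc (Dm (intl s))" using s(2) by (simp add: ellm_def)
      show "intl s + replicate_mset (Suc (Dm (intl s))) 0 = s"
        unfolding c0[symmetric] by (rule mset_split0[symmetric])
      show "intl s \<in> {\<sigma>. \<sigma> \<subseteq># \<rho>}" using s by (simp add: \<rho>_def intl_mono)
      have Ms: "M = s + (M - s)" using s by simp
      have e2: "ellm (M - s) = int (l - 1)" using ellm_add[of s "M - s"] Ms[symmetric] s l by simp
      have i2: "intl (M - s) = \<rho> - intl s" using intl_add[of s "M - s"] Ms[symmetric] \<rho>_def by simp
      have "poly (RM s) y = Atil y (real 1) (intl s) / mf (intl s)"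
        by (rule poly_RM_Atil) (use s in simp_all)
      moreover have "poly (RM (M - s)) y = Atil y (real (l - 1)) (\<rho> - intl s) / mf (\<rho> - intl s)"
        unfolding i2[symmetric] by (rule poly_RM_Atil[OF e2]) (use l in simp)
      ultimately show "F (intl s) = poly (RM s) y * poly (RM (M - s)) y" by (simp add: F_def)
    next
      fix \<sigma> assume "\<sigma> \<in> {\<sigma>. \<sigma> \<subseteq># \<rho>}"
      then have s: "\<sigma> \<subseteq># \<rho>" by simp
      have z: "0 \<notin># \<sigma>" using s zero_notin_intl[of M] \<rho>_def by (meson mset_subset_eqD)
      show "intl (\<sigma> + replicate_mset (Suc (Dm \<sigma>)) 0) = \<sigma>" using intl_id[OF z] by simp
      have "Dm \<sigma> \<le> Dm \<rho>" by (rule Dm_mono[OF s])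
      moreover have "int (count M 0) = int l + int (Dm \<rho>)" using count0_ellm[of M] l \<rho>_def by simp
      ultimately have c0: "Suc (Dm \<sigma>) \<le> count M 0" using l by linarith
      have "\<sigma> + replicate_mset (Suc (Dm \<sigma>)) 0 \<subseteq># M"
        unfolding subseteq_mset_def
      proof
        fix d show "count (\<sigma> + replicate_mset (Suc (Dm \<sigma>)) 0) d \<le> count M d"
        proof (cases "d = 0")
          case True then show ?thesis using z c0 by (simp add: not_in_iff)
        next
          case False
          have "count \<sigma> d \<le> count \<rho> d" using s by (simp add: subseteq_mset_def)
          then show ?thesis using False by (simp add: \<rho>_def count_intl)
        qed
      qed
      moreover have "ellm (\<sigma> + replicate_mset (Suc (Dm \<sigma>)) 0) = 1"
        using intl_id[OF z] z by (simp add: ellm_def not_in_iff)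
      ultimately show "\<sigma> + replicate_mset (Suc (Dm \<sigma>)) 0 \<in> {s. s \<subseteq># M \<and> ellm s = 1}" by simp
    qed
    also have "\<dots> = Atil y (real (1 + (l - 1))) \<rho> / mf \<rho>"
      unfolding F_def by (rule conv_mset)
    also have "\<dots> = poly (RM M) y"
      using l by (simp add: poly_RM_Atil \<rho>_def)
    finally show ?thesis .
  qed
  then show ?thesis by (simp add: poly_eq_poly_eq_iff[symmetric] fun_eq_iff)
qed

lemma mf_remove:
  assumes "d \<in># \<rho>"
  shows "mf \<rho> = real (count \<rho> d) * mf (\<rho> - {#d#})"
proof -
  define D where "D = set_mset \<rho>"
  have fD: "finite D" and dD: "d \<in> D" using assms by (auto simp: D_def)
  have s2: "set_mset (\<rho> - {#d#}) \<subseteq> D" by (auto simp: D_def dest: in_diffD)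
  obtain m where m: "count \<rho> d = Suc m" using assms by (metis count_greater_zero_iff gr0_implies_Suc)
  define P where "P = (\<Prod>e\<in>D - {d}. real (fact (count \<rho> e)))"
  have P2: "(\<Prod>e\<in>D - {d}. real (fact (count (\<rho> - {#d#}) e))) = P"
    unfolding P_def by (rule prod.cong[OF refl]) simp
  have "mf (\<rho> - {#d#}) = real (fact (count (\<rho> - {#d#}) d)) * (\<Prod>e\<in>D - {d}. real (fact (count (\<rho> - {#d#}) e)))"
    unfolding mf_superset[OF fD s2] by (rule prod.remove[OF fD dD])
  then have a: "mf (\<rho> - {#d#}) = real (fact m) * P" using m P2 by simp
  have "mf \<rho> = real (fact (count \<rho> d)) * P"
    unfolding mf_def D_def[symmetric] P_def by (rule prod.remove[OF fD dD])
  then have b: "mf \<rho> = real (Suc m) * real (fact m) * P" using m by (simp add: fact_Suc algebra_simps)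
  show ?thesis using a b m by simp
qed

lemma sum_mset_lin:
  "sum_mset (image_mset (\<lambda>d. \<alpha> + \<beta> * real (d - 1)) \<rho>) = \<alpha> * real (size \<rho>) + \<beta> * real (Dm \<rho>)"
  by (induction \<rho>) (simp_all add: Dm_def algebra_simps)

lemma alg_tree:
  assumes e1: "ellm M = 1" and ne: "intl M \<noteq> {#}"
  shows "(\<Sum>d\<in>set_mset (intl M). hook_factor d (size (intl M)) * RM (M - {#d#})) = RM M"
proof -
  define \<rho> where "\<rho> = intl M"
  define n where "n = size \<rho>"
  define c where "c = count M 0"
  have n1: "n \<ge> 1" using ne by (simp add: n_def \<rho>_def Suc_le_eq nonempty_has_size)
  have c: "real c = 1 + real (Dm \<rho>)" using count0_ellm[of M] e1 by (simp add: c_def \<rho>_def)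
  have cpos: "real c > 0" using c by simp
  have "poly (\<Sum>d\<in>set_mset \<rho>. hook_factor d n * RM (M - {#d#})) y = poly (RM M) y" for y
  proof -
    have tmd: "poly (hook_factor d n * RM (M - {#d#})) y
        = real (count \<rho> d) * (real d * poly (hook_factor d n) y) * (ff (real c * y) (n - 1) / (real c * mf \<rho>))"
      if d: "d \<in> set_mset \<rho>" for d
    proof -
      have d0: "d \<noteq> 0"
      proof
        assume "d = 0" then show False using d zero_notin_intl[of M] \<rho>_def by simp
      qed
      have dM: "d \<in># M" using d by (simp add: \<rho>_def intl_def)
      have Md: "M = (M - {#d#}) + {#d#}" using dM by simp
      have "intl M = intl (M - {#d#}) + intl {#d#}" by (subst Md, rule intl_add)
      then have i1: "intl (M - {#d#}) = \<rho> - {#d#}" using d0 by (simp add: \<rho>_def)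
      have c1: "count (M - {#d#}) 0 = c" using d0 by (simp add: c_def)
      have rd: "\<rho> = (\<rho> - {#d#}) + {#d#}" using d by simp
      have Dd: "Dm \<rho> = Dm (\<rho> - {#d#}) + (d - 1)"
        by (subst rd, subst Dm_add) (simp add: Dm_def)
      have e2: "ellm (M - {#d#}) = int d"
        using count0_ellm[of "M - {#d#}"] c1 count0_ellm[of M] e1 Dd i1 d0
        by (simp add: c_def \<rho>_def)
      have cd0: "count \<rho> d \<noteq> 0" using d by (simp add: count_eq_zero_iff)
      have s1': "size (\<rho> - {#d#}) = n - 1" using d by (simp add: n_def size_Diff_singleton)
      have s1: "size (intl (M - {#d#})) = n - 1" using i1 s1' by simp
      have "poly (RM (M - {#d#})) y = real d / real c / mf (\<rho> - {#d#}) * ff (real c * y) (n - 1)"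
        unfolding poly_RM e2 c1 i1 by (simp add: s1')
      also have "\<dots> = real (count \<rho> d) * real d * ff (real c * y) (n - 1) / (real c * mf \<rho>)"
        unfolding mf_remove[OF d] using cpos mf_pos[of "\<rho> - {#d#}"] s1' d0 d by (simp add: field_simps count_eq_zero_iff)
      finally show ?thesis by simp
    qed
    have hf: "real d * poly (hook_factor d n) y = (1 - real n + y) / real n + y * real (d - 1)"
      if "d \<in> set_mset \<rho>" for d
    proof -
      have "d \<noteq> 0"
      proof
        assume "d = 0" then show False using that zero_notin_intl[of M] \<rho>_def by simp
      qed
      then have d1: "real (d - 1) = real d - 1" by (simp add: of_nat_diff)
      have "real ((d - 1) * n + 1) = real (d - 1) * real n + 1" by simp
      then show ?thesis using n1 \<open>d \<noteq> 0\<close> unfolding hook_factor_def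
        by (simp add: field_simps d1)
    qed
    have "poly (\<Sum>d\<in>set_mset \<rho>. hook_factor d n * RM (M - {#d#})) y
        = (\<Sum>d\<in>set_mset \<rho>. real (count \<rho> d) * ((1 - real n + y) / real n + y * real (d - 1))) * (ff (real c * y) (n - 1) / (real c * mf \<rho>))"
      unfolding poly_sum sum_distrib_right by (rule sum.cong[OF refl]) (simp only: tmd hf mult.assoc)
    also have "(\<Sum>d\<in>set_mset \<rho>. real (count \<rho> d) * ((1 - real n + y) / real n + y * real (d - 1)))
        = sum_mset (image_mset (\<lambda>d. (1 - real n + y) / real n + y * real (d - 1)) \<rho>)"
      by (rule sum_count_mset) auto
    also have "\<dots> = (1 - real n + y) / real n * real n + y * real (Dm \<rho>)"
      unfolding sum_mset_lin n_def ..
    also have "\<dots> = real c * y - real (n - 1)" using n1 c by (simp add: field_simps of_nat_diff)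
    also have "(real c * y - real (n - 1)) * (ff (real c * y) (n - 1) / (real c * mf \<rho>))
        = 1 / real c / mf \<rho> * ff (real c * y) n"
    proof -
      have "ff (real c * y) n = ff (real c * y) (n - 1) * (real c * y - real (n - 1))"
        using n1 ff_Suc[of "real c * y" "n - 1"] by simp
      then show ?thesis using cpos mf_pos[of \<rho>] by (simp add: field_simps)
    qed
    also have "\<dots> = poly (RM M) y" by (simp add: poly_RM e1 c_def \<rho>_def n_def)
    finally show ?thesis .
  qed
  then show ?thesis by (simp add: poly_eq_poly_eq_iff[symmetric] fun_eq_iff \<rho>_def n_def)
qed

definition FS :: "nat multiset \<Rightarrow> ptree list set" where
  "FS M = {F. mset (forest_degs F) = M}"

definition WM :: "nat multiset \<Rightarrow> real poly" where
  "WM M = (\<Sum>F\<in>FS M. forest_weight F)"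

lemma fd_Nil[simp]: "forest_degs [] = []" by (simp add: forest_degs_def)
lemma fd_Cons[simp]: "forest_degs (t # F) = degs t @ forest_degs F" by (simp add: forest_degs_def)
lemma fd_append[simp]: "forest_degs (F @ G) = forest_degs F @ forest_degs G" by (simp add: forest_degs_def)
lemma fw_Nil[simp]: "forest_weight [] = 1" by (simp add: forest_weight_def)
lemma fw_Cons[simp]: "forest_weight (t # F) = tree_weight t * forest_weight F" by (simp add: forest_weight_def)
lemma fw_append[simp]: "forest_weight (F @ G) = forest_weight F * forest_weight G" by (simp add: forest_weight_def)

lemma degs_ne[simp]: "degs t \<noteq> []" by (cases t) simp

lemma ellm_empty[simp]: "ellm {#} = 0" by (simp add: ellm_def Dm_def intl_def)

lemma len_degs: "1 \<le> length (degs t)" by (cases t) simp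

lemma ellm_single: "ellm {#d#} = 1 - int d"
  by (cases "d = 0") (simp_all add: ellm_def Dm_def intl_def)

lemma ellm_add_mset: "ellm (add_mset d M) = 1 - int d + ellm M"
  using ellm_add[of "{#d#}" M] by (simp add: ellm_single)

lemma ellm_tree: "ellm (mset (degs t)) = 1"
proof (induction t)
  case (Node ts)
  have "ellm (mset (forest_degs ts)) = int (length ts)"
    using Node.IH by (induction ts) (auto simp: ellm_add)
  then show ?case by (simp add: forest_degs_def ellm_add_mset)
qed

lemma ellm_forest: "ellm (mset (forest_degs F)) = int (length F)"
  by (induction F) (simp_all add: ellm_add ellm_tree)

lemma nint_size: "nint t = size (intl (mset (degs t)))"
proof (induction t)
  case (Node ts)
  have "size (intl (mset (forest_degs ts))) = sum_list (map nint ts)"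
    using Node.IH by (induction ts) auto
  then show ?case by (simp add: forest_degs_def)
qed

lemma length_le_fd: "length F \<le> length (forest_degs F)"
proof (induction F)
  case (Cons a F)
  then show ?case using len_degs[of a] by simp
qed simp

lemma finite_len_fd: "finite {F. length (forest_degs F) = N}"
proof (induction N)
  case 0
  have "{F. length (forest_degs F) = 0} \<subseteq> {[]}"
  proof
    fix F assume "F \<in> {F. length (forest_degs F) = 0}"
    then have "length F \<le> 0" using length_le_fd[of F] by simp
    then show "F \<in> {[]}" by simp
  qed
  then show ?case by (rule finite_subset) simp
next
  case (Suc N)
  have "{F. length (forest_degs F) = Suc N}
      \<subseteq> (\<lambda>(k, G). Node (take k G) # drop k G) ` ({..N} \<times> {G. length (forest_degs G) = N})"
  proof
    fix F assume "F \<in> {F. length (forest_degs F) = Suc N}"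
    then have F: "length (forest_degs F) = Suc N" by simp
    then obtain t H where FH: "F = t # H" by (cases F) auto
    obtain ts where t: "t = Node ts" by (cases t)
    have fd: "forest_degs F = length ts # forest_degs (ts @ H)" by (simp add: FH t forest_degs_def)
    then have lG: "length (forest_degs (ts @ H)) = N" using F by simp
    have "length ts \<le> N" using length_le_fd[of "ts @ H"] lG by simp
    moreover have "F = Node (take (length ts) (ts @ H)) # drop (length ts) (ts @ H)" by (simp add: FH t)
    ultimately show "F \<in> (\<lambda>(k, G). Node (take k G) # drop k G) ` ({..N} \<times> {G. length (forest_degs G) = N})"
      using lG by (intro image_eqI[where x = "(length ts, ts @ H)"]) auto
  qed
  moreover have "finite ((\<lambda>(k, G). Node (take k G) # drop k G) ` ({..N} \<times> {G. length (forest_degs G) = N}))"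
    using Suc.IH by simp
  ultimately show ?case by (rule finite_subset)
qed

lemma finite_FS: "finite (FS M)"
proof -
  have "FS M \<subseteq> {F. length (forest_degs F) = size M}" by (auto simp: FS_def)
  then show ?thesis by (rule finite_subset) (rule finite_len_fd)
qed


lemma fw_single_node:
  assumes "ts \<noteq> []"
  shows "forest_weight [Node ts] = hook_factor (length ts) (size (intl (mset (degs (Node ts))))) * forest_weight ts"
proof -
  have "forest_weight [Node ts] = hook_factor (length ts) (nint (Node ts)) * forest_weight ts"
    using assms by (simp add: forest_weight_def del: nint.simps)
  then show ?thesis by (simp only: nint_size)
qed

lemma ellm_remove:
  assumes "d \<in># M"
  shows "ellm (M - {#d#}) = ellm M - 1 + int d"
proof -
  have "M = add_mset d (M - {#d#})" using assms by simp
  then have "ellm M = 1 - int d + ellm (M - {#d#})" by (metis ellm_add_mset)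
  then show ?thesis by simp
qed

lemma WM_tree:
  assumes e1: "ellm M = 1" and ne: "intl M \<noteq> {#}"
  shows "WM M = (\<Sum>d\<in>set_mset (intl M). hook_factor d (size (intl M)) * WM (M - {#d#}))"
proof -
  have lenfs: "length ts = d" if d: "d \<in># intl M" and ts: "ts \<in> FS (M - {#d#})" for d ts
  proof -
    have dM: "d \<in># M" using d by (simp add: intl_def)
    have "int (length ts) = ellm (M - {#d#})" using ts ellm_forest[of ts] by (simp add: FS_def)
    also have "\<dots> = int d" using ellm_remove[OF dM] e1 by simp
    finally show ?thesis by simp
  qed
  have FSeq: "FS M = (\<Union>d\<in>set_mset (intl M). (\<lambda>ts. [Node ts]) ` FS (M - {#d#}))"
  proof (intro equalityI subsetI)
    fix F assume "F \<in> FS M"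
    then have mF: "mset (forest_degs F) = M" by (simp add: FS_def)
    have "int (length F) = 1" using ellm_forest[of F] mF e1 by simp
    then have "length F = 1" by simp
    then obtain t where F: "F = [t]" by (metis One_nat_def length_0_conv length_Suc_conv)
    obtain ts where t: "t = Node ts" by (cases t)
    have mM: "M = add_mset (length ts) (mset (forest_degs ts))" using mF F t by (simp add: forest_degs_def)
    have l0: "length ts \<noteq> 0"
    proof
      assume "length ts = 0" then have "ts = []" by simp
      then have "M = {#0#}" using mM by simp
      then show False using ne by simp
    qed
    then have "length ts \<in># intl M" using mM by (simp add: intl_def)
    moreover have "ts \<in> FS (M - {#length ts#})" using mM by (simp add: FS_def)
    ultimately show "F \<in> (\<Union>d\<in>set_mset (intl M). (\<lambda>ts. [Node ts]) ` FS (M - {#d#}))" using F t by blast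
  next
    fix F assume "F \<in> (\<Union>d\<in>set_mset (intl M). (\<lambda>ts. [Node ts]) ` FS (M - {#d#}))"
    then obtain d ts where d: "d \<in># intl M" and ts: "ts \<in> FS (M - {#d#})" and F: "F = [Node ts]" by auto
    have dM: "d \<in># M" using d by (simp add: intl_def)
    have "mset (forest_degs F) = add_mset d (M - {#d#})"
      using F ts lenfs[OF d ts] by (simp add: FS_def forest_degs_def)
    also have "\<dots> = M" using dM by simp
    finally show "F \<in> FS M" by (simp add: FS_def)
  qed
  have "WM M = (\<Sum>d\<in>set_mset (intl M). \<Sum>F\<in>(\<lambda>ts. [Node ts]) ` FS (M - {#d#}). forest_weight F)"
    unfolding WM_def FSeq
  proof (rule sum.UNION_disjoint)
    show "finite (set_mset (intl M))" by simp
    show "\<forall>d\<in>set_mset (intl M). finite ((\<lambda>ts. [Node ts]) ` FS (M - {#d#}))" by (simp add: finite_FS)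
    show "\<forall>d\<in>set_mset (intl M). \<forall>e\<in>set_mset (intl M). d \<noteq> e \<longrightarrow>
          (\<lambda>ts. [Node ts]) ` FS (M - {#d#}) \<inter> (\<lambda>ts. [Node ts]) ` FS (M - {#e#}) = {}"
    proof (intro ballI impI equals0I)
      fix d e F assume d: "d \<in> set_mset (intl M)" and e: "e \<in> set_mset (intl M)" and de: "d \<noteq> e"
        and F: "F \<in> (\<lambda>ts. [Node ts]) ` FS (M - {#d#}) \<inter> (\<lambda>ts. [Node ts]) ` FS (M - {#e#})"
      then obtain ts ts' where ts: "ts \<in> FS (M - {#d#})" and ts': "ts' \<in> FS (M - {#e#})"
        and "F = [Node ts]" "F = [Node ts']" by blast
      then have "ts = ts'" by simp
      then show False using lenfs[OF d ts] lenfs[OF e ts'] de by simp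
    qed
  qed
  also have "\<dots> = (\<Sum>d\<in>set_mset (intl M). hook_factor d (size (intl M)) * WM (M - {#d#}))"
  proof (rule sum.cong[OF refl])
    fix d assume d: "d \<in> set_mset (intl M)"
    have d0: "d \<noteq> 0" using d by (auto simp: intl_def)
    have dM: "d \<in># M" using d by (simp add: intl_def)
    have inj: "inj_on (\<lambda>ts. [Node ts]) (FS (M - {#d#}))" by (auto simp: inj_on_def)
    have "(\<Sum>F\<in>(\<lambda>ts. [Node ts]) ` FS (M - {#d#}). forest_weight F) = (\<Sum>ts\<in>FS (M - {#d#}). forest_weight [Node ts])"
      by (rule sum.reindex[OF inj, unfolded comp_def])
    also have "\<dots> = (\<Sum>ts\<in>FS (M - {#d#}). hook_factor d (size (intl M)) * forest_weight ts)"
    proof (rule sum.cong[OF refl])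
      fix ts assume ts: "ts \<in> FS (M - {#d#})"
      have l: "length ts = d" by (rule lenfs[OF d ts])
      then have ne': "ts \<noteq> []" using d0 by auto
      have "mset (degs (Node ts)) = add_mset d (M - {#d#})" using ts l by (simp add: FS_def forest_degs_def)
      then have "mset (degs (Node ts)) = M" using dM by simp
      then show "forest_weight [Node ts] = hook_factor d (size (intl M)) * forest_weight ts"
        using fw_single_node[OF ne'] l by simp
    qed
    also have "\<dots> = hook_factor d (size (intl M)) * WM (M - {#d#})"
      by (simp add: WM_def sum_distrib_left)
    finally show "(\<Sum>F\<in>(\<lambda>ts. [Node ts]) ` FS (M - {#d#}). forest_weight F) = hook_factor d (size (intl M)) * WM (M - {#d#})" .
  qed
  finally show ?thesis .
qed


lemma WM_forest:
  assumes e2: "2 \<le> ellm M"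
  shows "WM M = (\<Sum>s\<in>{s. s \<subseteq># M \<and> ellm s = 1}. WM s * WM (M - s))"
proof -
  define S where "S = {s. s \<subseteq># M \<and> ellm s = 1}"
  have fS: "finite S" unfolding S_def by (rule finite_subset[OF _ finite_submsets[of M]]) auto
  have "(\<Sum>s\<in>S. WM s * WM (M - s)) = (\<Sum>s\<in>S. \<Sum>p\<in>FS s \<times> FS (M - s). forest_weight (fst p) * forest_weight (snd p))"
    unfolding WM_def by (simp add: sum_product sum.cartesian_product split_def)
  also have "\<dots> = (\<Sum>x\<in>Sigma S (\<lambda>s. FS s \<times> FS (M - s)). forest_weight (fst (snd x)) * forest_weight (snd (snd x)))"
    using fS by (subst sum.Sigma) (auto simp: finite_FS split_def)
  also have "\<dots> = (\<Sum>F\<in>FS M. forest_weight F)"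
  proof (rule sum.reindex_bij_witness[where j = "\<lambda>x. fst (snd x) @ snd (snd x)"
        and i = "\<lambda>F. (mset (degs (hd F)), ([hd F], tl F))"])
    fix x assume x: "x \<in> Sigma S (\<lambda>s. FS s \<times> FS (M - s))"
    then obtain s G H where xe: "x = (s, G, H)" and s: "s \<subseteq># M" "ellm s = 1"
      and G: "mset (forest_degs G) = s" and H: "mset (forest_degs H) = M - s"
      by (auto simp: S_def FS_def)
    have "int (length G) = 1" using ellm_forest[of G] G s by simp
    then have "length G = 1" by simp
    then obtain t where t: "G = [t]" by (metis One_nat_def length_0_conv length_Suc_conv)
    show "(mset (degs (hd (fst (snd x) @ snd (snd x)))), [hd (fst (snd x) @ snd (snd x))], tl (fst (snd x) @ snd (snd x))) = x"
      using xe t G by simp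
    have "mset (forest_degs (G @ H)) = s + (M - s)" using G H by simp
    also have "\<dots> = M" using s by simp
    finally show "fst (snd x) @ snd (snd x) \<in> FS M" using xe by (simp add: FS_def)
    show "forest_weight (fst (snd x) @ snd (snd x)) = forest_weight (fst (snd x)) * forest_weight (snd (snd x))"
      by simp
  next
    fix F assume F: "F \<in> FS M"
    then have mF: "mset (forest_degs F) = M" by (simp add: FS_def)
    have "int (length F) \<ge> 2" using ellm_forest[of F] mF e2 by simp
    then obtain t H where FH: "F = t # H" by (cases F) auto
    show "fst (snd (mset (degs (hd F)), [hd F], tl F)) @ snd (snd (mset (degs (hd F)), [hd F], tl F)) = F"
      using FH by simp
    have M: "M = mset (degs t) + mset (forest_degs H)" using mF FH by simp
    have "mset (degs t) \<subseteq># M" using M by simp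
    moreover have "ellm (mset (degs t)) = 1" by (rule ellm_tree)
    moreover have "mset (forest_degs H) = M - mset (degs t)" using M by simp
    ultimately show "(mset (degs (hd F)), [hd F], tl F) \<in> Sigma S (\<lambda>s. FS s \<times> FS (M - s))"
      using FH by (simp add: S_def FS_def)
  qed
  finally show ?thesis unfolding WM_def S_def by simp
qed

lemma RM_leaf: "RM {#0#} = 1"
proof -
  have "poly (RM {#0#}) y = poly 1 y" for y
  proof -
    have e: "ellm {#0#} = int 1" by (simp add: ellm_single)
    have "poly (RM {#0#}) y = Atil y (real 1) (intl {#0#}) / mf (intl {#0#})"
      by (rule poly_RM_Atil[OF e]) simp
    then show ?thesis by (simp add: Atil_def mf_def)
  qed
  then show ?thesis by (simp add: poly_eq_poly_eq_iff[symmetric] fun_eq_iff)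
qed

lemma WM_leaf: "WM {#0#} = 1"
proof -
  have "FS {#0#} = {[Node []]}"
  proof (intro equalityI subsetI)
    fix F assume "F \<in> FS {#0#}"
    then have mF: "mset (forest_degs F) = {#0#}" by (simp add: FS_def)
    have "int (length F) = 1" using ellm_forest[of F] mF by (simp add: ellm_single)
    then have "length F = 1" by simp
    then obtain t where F: "F = [t]" by (metis One_nat_def length_0_conv length_Suc_conv)
    obtain ts where t: "t = Node ts" by (cases t)
    have "add_mset (length ts) (mset (forest_degs ts)) = {#0#}" using mF F t by (simp add: forest_degs_def)
    then have "length ts = 0" by (simp only: add_mset_eq_single)
    then show "F \<in> {[Node []]}" using F t by simp
  qed (simp add: FS_def forest_degs_def)
  then show ?thesis by (simp add: WM_def forest_weight_def)
qed

lemma WM_RM: "1 \<le> ellm M \<Longrightarrow> WM M = RM M"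
proof (induction "size M" arbitrary: M rule: less_induct)
  case less
  show ?case
  proof (cases "ellm M = 1")
    case e1: True
    show ?thesis
    proof (cases "intl M = {#}")
      case True
      have "int (count M 0) = 1" using count0_ellm[of M] e1 True by (simp add: Dm_def)
      then have "count M 0 = 1" by simp
      then have c1: "count M 0 = 1" .
      have "M = intl M + replicate_mset (count M 0) 0" by (rule mset_split0)
      also have "\<dots> = {#0#}" using True c1 by simp
      finally have "M = {#0#}" .
      then show ?thesis by (simp add: WM_leaf RM_leaf)
    next
      case ne: False
      have "WM M = (\<Sum>d\<in>set_mset (intl M). hook_factor d (size (intl M)) * WM (M - {#d#}))"
        by (rule WM_tree[OF e1 ne])
      also have "\<dots> = (\<Sum>d\<in>set_mset (intl M). hook_factor d (size (intl M)) * RM (M - {#d#}))"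
      proof (rule sum.cong[OF refl])
        fix d assume d: "d \<in> set_mset (intl M)"
        have dM: "d \<in># M" and d0: "d \<noteq> 0" using d by (auto simp: intl_def)
        have "M \<noteq> {#}" using dM by auto
        then have sz: "size (M - {#d#}) < size M" using dM by (simp add: size_Diff_singleton_if nonempty_has_size)
        have "ellm (M - {#d#}) = int d" using ellm_remove[OF dM] e1 by simp
        then have "1 \<le> ellm (M - {#d#})" using d0 by simp
        then show "hook_factor d (size (intl M)) * WM (M - {#d#}) = hook_factor d (size (intl M)) * RM (M - {#d#})"
          using less.hyps[OF sz] by simp
      qed
      also have "\<dots> = RM M" by (rule alg_tree[OF e1 ne])
      finally show ?thesis .
    qed
  next
    case False
    then have e2: "2 \<le> ellm M" using less.prems by simp
    have "WM M = (\<Sum>s\<in>{s. s \<subseteq># M \<and> ellm s = 1}. WM s * WM (M - s))"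
      by (rule WM_forest[OF e2])
    also have "\<dots> = (\<Sum>s\<in>{s. s \<subseteq># M \<and> ellm s = 1}. RM s * RM (M - s))"
    proof (rule sum.cong[OF refl])
      fix s assume "s \<in> {s. s \<subseteq># M \<and> ellm s = 1}"
      then have s: "s \<subseteq># M" "ellm s = 1" by auto
      have Ms: "M = s + (M - s)" using s by simp
      have eMs: "ellm (M - s) = ellm M - 1" using ellm_add[of s "M - s"] Ms[symmetric] s by simp
      have sne: "s \<noteq> {#}" using s by auto
      have Msne: "M - s \<noteq> {#}" using eMs e2 by auto
      have sz: "size M = size s + size (M - s)" using Ms by (metis size_union)
      have "size s < size M" using sz Msne by (simp add: nonempty_has_size)
      moreover have "size (M - s) < size M" using sz sne by (simp add: nonempty_has_size)
      ultimately show "WM s * WM (M - s) = RM s * RM (M - s)"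
        using less.hyps s eMs e2 by simp
    qed
    also have "\<dots> = RM M"
      using alg_conv[of M "nat (ellm M)"] e2 by simp
    finally show ?thesis .
  qed
qed

theorem theorem2p3:
  fixes r :: "nat \<Rightarrow> nat"
  assumes fin: "finite {d. r d \<noteq> 0}"
    and ell: "ell_of r \<ge> 1"
  shows "(\<Sum>F\<in>forests_of_type r. forest_weight F) =
         smult (real_of_int (ell_of r) / real (r 0)
                  / (\<Prod>d\<in>{d. 1 \<le> d \<and> r d \<noteq> 0}. real (fact (r d))))
               (\<Prod>k<n_of r. [: - real k, real (r 0) :])"
proof -
  define M where "M = Abs_multiset r"
  have fin': "finite {x. 0 < r x}"
  proof -
    have "{x. 0 < r x} = {d. r d \<noteq> 0}" by auto
    then show ?thesis using fin by simp
  qed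
  have cM: "count M = r" unfolding M_def by (rule count_Abs_multiset[OF fin'])
  have nd: "num_deg F i = count (mset (forest_degs F)) i" for F i
  proof -
    have "(\<lambda>d. d = i) = (=) i" by auto
    then show ?thesis by (simp add: num_deg_def count_mset count_list_eq_length_filter)
  qed
  have iff: "(\<forall>i. num_deg F i = r i) \<longleftrightarrow> mset (forest_degs F) = M" for F
    unfolding nd multiset_eq_iff cM ..
  have FSeq: "forests_of_type r = FS M"
    unfolding forests_of_type_def FS_def iff ..
  have "ell_of (count M) \<ge> 1" unfolding cM by (rule ell)
  then have "ellm M \<ge> 1" unfolding ell_of_ellm .
  then have "WM M = RM M" by (rule WM_RM)
  then show ?thesis unfolding WM_def FSeq RM_def cM .
qed

end
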